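(* Suppose that for each sequence $R\in\mathbb{R}^{\mathbb{N}}$, $\mathcal{Y}_R$ is a family of metric spaces with uniform property A. If $\mathcal{X}$ is a family of metric spaces such that $\mathcal{X}$ is uniformly $R$-decomposable over $\mathcal{Y}_R$ for every $R\in\mathbb{R}^{\mathbb{N}}$, then $\mathcal{X}$ has uniform property A.
   Context: A family $\mathcal{U}$ of metric subspaces of a metric space $(X,d)$ is $r$-disjoint if $d(x,y)>r$ whenever $x\in U$, $y\in U'$ and $U\neq U'$ are elements of $\mathcal{U}$. For families $\mathcal{X},\mathcal{Y}$ of metric spaces and $R=(R_1,R_2,\dots)\in\mathbb{R}^{\mathbb{N}}$, $\mathcal{X}$ is uniformly $R$-decomposable over $\mathcal{Y}$ if there is an integer $k$ such that for each $X\in\mathcal{X}$ there exist subcollections $\mathcal{U}_1,\dots,\mathcal{U}_k\subseteq\mathcal{Y}$, consisting of subspaces of $X$ with the induced metric, such that each $\mathcal{U}_i$ is $R_i$-disjoint and $\bigcup_i\mathcal{U}_i$ covers $X$. For a metric space $X$, $\ell^1(X)$ is the $\ell^1$-space of the underlying set and $\xi_x$ denotes the value of a map $\xi\colon X\to\ell^1(X)$ at $x$. Such a map has $\varepsilon$-variation if for each $k\in\mathbb{N}$ and $x_1,x_2\in X$ with $d(x_1,x_2)\le k$ one has $\|\xi_{x_1}-\xi_{x_2}\|_1\le k\varepsilon$. A family $\mathcal{X}$ has uniform property A if for each $\varepsilon>0$ there is $S>0$ such that for each $X\in\mathcal{X}$ there is $\xi\colon X\to\ell^1(X)$ with $\|\xi_x\|_1=1$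 for all $x$, $\xi$ has $\varepsilon$-variation, and $\operatorname{supp}\xi_x\subset\bar B(x,S)$ for all $x\in X$. (The paper introduces uniform property A for families of discrete metric spaces with bounded geometry.) *)

theory Defs
  imports "HOL-Analysis.Analysis"
begin

text \<open>A metric space is represented by its carrier set together with a distance
function; only the values of the distance function on the carrier matter.\<close>

type_synonym 'a mspace = "'a set \<times> ('a \<Rightarrow> 'a \<Rightarrow> real)"

definition metric_on :: "'a set \<Rightarrow> ('a \<Rightarrow> 'a \<Rightarrow> real) \<Rightarrow> bool" where
  "metric_on A d \<longleftrightarrow>
     (\<forall>x\<in>A. \<forall>y\<in>A. 0 \<le> d x y \<and> (d x y = 0 \<longleftrightarrow> x = y) \<and> d x y = d y x) \<and>
     (\<forall>x\<in>A. \<forall>y\<in>A. \<forall>z\<in>A. d x z \<le> d x y + d y z)"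

definition metric_family :: "'a mspace set \<Rightarrow> bool" where
  "metric_family \<F> \<longleftrightarrow> (\<forall>(A, d) \<in> \<F>. metric_on A d)"

definition r_disjoint :: "('a \<Rightarrow> 'a \<Rightarrow> real) \<Rightarrow> real \<Rightarrow> 'a set set \<Rightarrow> bool" where
  "r_disjoint d r \<U> \<longleftrightarrow>
     (\<forall>U\<in>\<U>. \<forall>U'\<in>\<U>. U \<noteq> U' \<longrightarrow> (\<forall>x\<in>U. \<forall>y\<in>U'. d x y > r))"

definition induced_member :: "'a set \<Rightarrow> ('a \<Rightarrow> 'a \<Rightarrow> real) \<Rightarrow> 'a mspace set \<Rightarrow> bool" where
  "induced_member V d \<Y> \<longleftrightarrow>
     (\<exists>(W, e) \<in> \<Y>. W = V \<and> (\<forall>x\<in>V. \<forall>y\<in>V. e x y = d x y))"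

text \<open>Uniform R-decomposability; R = (R_1, R_2, ...) is indexed from 1.\<close>
definition unif_decomposable ::
    "'a mspace set \<Rightarrow> (nat \<Rightarrow> real) \<Rightarrow> 'a mspace set \<Rightarrow> bool" where
  "unif_decomposable \<X> R \<Y> \<longleftrightarrow>
     (\<exists>k::nat. \<forall>(X, d) \<in> \<X>. \<exists>\<U> :: nat \<Rightarrow> 'a set set.
        (\<forall>i\<in>{1..k}. (\<forall>V\<in>\<U> i. V \<subseteq> X \<and> induced_member V d \<Y>) \<and> r_disjoint d (R i) (\<U> i)) \<and>
        X \<subseteq> (\<Union>i\<in>{1..k}. \<Union>(\<U> i)))"

definition l1_norm :: "'a set \<Rightarrow> ('a \<Rightarrow> real) \<Rightarrow> real" where
  "l1_norm A f = infsum (\<lambda>y. \<bar>f y\<bar>) A"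

text \<open>Uniform property A; xi x is the element xi_x of l^1(X), as a function
  vanishing outside X.\<close>
definition uniform_property_A :: "'a mspace set \<Rightarrow> bool" where
  "uniform_property_A \<X> \<longleftrightarrow>
     (\<forall>eps>0. \<exists>S>0. \<forall>(X, d) \<in> \<X>. \<exists>\<xi> :: 'a \<Rightarrow> 'a \<Rightarrow> real.
        (\<forall>x\<in>X. ((\<lambda>y. \<bar>\<xi> x y\<bar>) summable_on X) \<and> l1_norm X (\<xi> x) = 1) \<and>
        (\<forall>k::nat. \<forall>x1\<in>X. \<forall>x2\<in>X. d x1 x2 \<le> real k \<longrightarrow>
            l1_norm X (\<lambda>y. \<xi> x1 y - \<xi> x2 y) \<le> real k * eps) \<and>
        (\<forall>x\<in>X. \<forall>y. \<xi> x y \<noteq> 0 \<longrightarrow> y \<in> X \<and> d x y \<le> S))"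

end

theory Submission
  imports Defs
begin


lemma real_summable_abs_iff:
  fixes f :: "'b \<Rightarrow> real"
  shows "(\<lambda>y. \<bar>f y\<bar>) summable_on A \<longleftrightarrow> f summable_on A"
  using summable_on_iff_abs_summable_on_real[of f A] by simp

lemma abs_summ:
  fixes f :: "'b \<Rightarrow> real"
  shows "f summable_on A \<Longrightarrow> (\<lambda>y. \<bar>f y\<bar>) summable_on A"
  using real_summable_abs_iff by blast

lemma finite_sum_summable:
  fixes f :: "'i \<Rightarrow> 'b \<Rightarrow> real"
  assumes "finite I" "\<And>i. i \<in> I \<Longrightarrow> f i summable_on A"
  shows "(\<lambda>y. \<Sum>i\<in>I. f i y) summable_on A \<and> infsum (\<lambda>y. \<Sum>i\<in>I. f i y) A = (\<Sum>i\<in>I. infsum (f i) A)"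
  using assms
proof (induction I rule: finite_induct)
  case empty
  then show ?case by simp
next
  case (insert j I)
  have s1: "f j summable_on A" using insert by auto
  have s2: "(\<lambda>y. \<Sum>i\<in>I. f i y) summable_on A" using insert by auto
  have e: "infsum (\<lambda>y. \<Sum>i\<in>I. f i y) A = (\<Sum>i\<in>I. infsum (f i) A)" using insert by auto
  have "(\<lambda>y. f j y + (\<Sum>i\<in>I. f i y)) summable_on A" using summable_on_add[OF s1 s2] .
  moreover have "infsum (\<lambda>y. f j y + (\<Sum>i\<in>I. f i y)) A = infsum (f j) A + infsum (\<lambda>y. \<Sum>i\<in>I. f i y) A"
    using infsum_add[OF s1 s2] by simp
  ultimately show ?case using insert e by simp
qed

lemma l1_nonneg: "0 \<le> l1_norm A f"
  unfolding l1_norm_def by (rule infsum_nonneg) simp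

lemma l1_sum_le:
  fixes g :: "'i \<Rightarrow> 'b \<Rightarrow> real"
  assumes "finite I" "\<And>i. i \<in> I \<Longrightarrow> g i summable_on A"
  shows "l1_norm A (\<lambda>y. \<Sum>i\<in>I. g i y) \<le> (\<Sum>i\<in>I. l1_norm A (g i))"
proof -
  have a: "(\<lambda>y. \<Sum>i\<in>I. g i y) summable_on A" using finite_sum_summable[of I g A] assms by blast
  have b: "(\<lambda>y. \<Sum>i\<in>I. \<bar>g i y\<bar>) summable_on A \<and> infsum (\<lambda>y. \<Sum>i\<in>I. \<bar>g i y\<bar>) A = (\<Sum>i\<in>I. infsum (\<lambda>y. \<bar>g i y\<bar>) A)"
    using finite_sum_summable[of I "\<lambda>i y. \<bar>g i y\<bar>" A] assms(2) abs_summ assms(1) by blast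
  have "l1_norm A (\<lambda>y. \<Sum>i\<in>I. g i y) \<le> infsum (\<lambda>y. \<Sum>i\<in>I. \<bar>g i y\<bar>) A"
    unfolding l1_norm_def
  proof (rule infsum_mono)
    show "(\<lambda>y. \<bar>\<Sum>i\<in>I. g i y\<bar>) summable_on A" by (rule abs_summ[OF a])
    show "(\<lambda>y. \<Sum>i\<in>I. \<bar>g i y\<bar>) summable_on A" using b by blast
  qed (rule sum_abs)
  also have "\<dots> = (\<Sum>i\<in>I. l1_norm A (g i))" using b by (simp add: l1_norm_def)
  finally show ?thesis .
qed

lemma l1_lincomb:
  fixes f g :: "'b \<Rightarrow> real"
  assumes "f summable_on A" "g summable_on A"
  shows "l1_norm A (\<lambda>y. a * f y - b * g y) \<le> \<bar>a - b\<bar> * l1_norm A f + \<bar>b\<bar> * l1_norm A (\<lambda>y. f y - g y)"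
proof -
  have sf: "(\<lambda>y. \<bar>f y\<bar>) summable_on A" by (rule abs_summ[OF assms(1)])
  have sfg: "(\<lambda>y. f y - g y) summable_on A"
    using summable_on_add[OF assms(1) summable_on_cmult_right[OF assms(2), of "-1"]] by simp
  hence sfg': "(\<lambda>y. \<bar>f y - g y\<bar>) summable_on A" by (rule abs_summ)
  have s1: "(\<lambda>y. \<bar>a - b\<bar> * \<bar>f y\<bar>) summable_on A" by (rule summable_on_cmult_right[OF sf])
  have s2: "(\<lambda>y. \<bar>b\<bar> * \<bar>f y - g y\<bar>) summable_on A" by (rule summable_on_cmult_right[OF sfg'])
  have s0: "(\<lambda>y. a * f y - b * g y) summable_on A"
    using summable_on_add[OF summable_on_cmult_right[OF assms(1), of a] summable_on_cmult_right[OF assms(2), of "-b"]] by simp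
  hence s0': "(\<lambda>y. \<bar>a * f y - b * g y\<bar>) summable_on A" by (rule abs_summ)
  have "l1_norm A (\<lambda>y. a * f y - b * g y) \<le> infsum (\<lambda>y. \<bar>a - b\<bar> * \<bar>f y\<bar> + \<bar>b\<bar> * \<bar>f y - g y\<bar>) A"
    unfolding l1_norm_def
  proof (rule infsum_mono[OF s0' summable_on_add[OF s1 s2]])
    fix y
    have "a * f y - b * g y = (a - b) * f y + b * (f y - g y)" by (simp add: algebra_simps)
    hence "\<bar>a * f y - b * g y\<bar> \<le> \<bar>(a - b) * f y\<bar> + \<bar>b * (f y - g y)\<bar>" by (metis abs_triangle_ineq)
    thus "\<bar>a * f y - b * g y\<bar> \<le> \<bar>a - b\<bar> * \<bar>f y\<bar> + \<bar>b\<bar> * \<bar>f y - g y\<bar>" by (simp add: abs_mult)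
  qed
  also have "\<dots> = \<bar>a - b\<bar> * l1_norm A f + \<bar>b\<bar> * l1_norm A (\<lambda>y. f y - g y)"
    unfolding l1_norm_def using infsum_add[OF s1 s2] infsum_cmult_right[of _ "\<lambda>y. \<bar>f y\<bar>"] infsum_cmult_right[of _ "\<lambda>y. \<bar>f y - g y\<bar>"] sf sfg' by simp
  finally show ?thesis .
qed

lemma l1_lincomb':
  fixes f g :: "'b \<Rightarrow> real"
  assumes "f summable_on A" "g summable_on A"
  shows "l1_norm A (\<lambda>y. a * f y - b * g y) \<le> \<bar>a - b\<bar> * l1_norm A g + \<bar>a\<bar> * l1_norm A (\<lambda>y. f y - g y)"
proof -
  have "l1_norm A (\<lambda>y. a * f y - b * g y) = l1_norm A (\<lambda>y. b * g y - a * f y)"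
    unfolding l1_norm_def by (simp add: abs_minus_commute)
  also have "\<dots> \<le> \<bar>b - a\<bar> * l1_norm A g + \<bar>a\<bar> * l1_norm A (\<lambda>y. g y - f y)"
    by (rule l1_lincomb[OF assms(2,1)])
  also have "\<dots> = \<bar>a - b\<bar> * l1_norm A g + \<bar>a\<bar> * l1_norm A (\<lambda>y. f y - g y)"
    unfolding l1_norm_def by (simp add: abs_minus_commute)
  finally show ?thesis .
qed

lemma l1_absdiff_le:
  fixes f g :: "'b \<Rightarrow> real"
  assumes "f summable_on A" "g summable_on A"
  shows "l1_norm A (\<lambda>y. \<bar>f y\<bar> - \<bar>g y\<bar>) \<le> l1_norm A (\<lambda>y. f y - g y)"
proof -
  have sfg: "(\<lambda>y. f y - g y) summable_on A"
    using summable_on_add[OF assms(1) summable_on_cmult_right[OF assms(2), of "-1"]] by simp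
  have sf: "(\<lambda>y. \<bar>f y\<bar>) summable_on A" "(\<lambda>y. \<bar>g y\<bar>) summable_on A" using abs_summ[OF assms(1)] abs_summ[OF assms(2)] by auto
  have s: "(\<lambda>y. \<bar>f y\<bar> - \<bar>g y\<bar>) summable_on A"
    using summable_on_add[OF sf(1) summable_on_cmult_right[OF sf(2), of "-1"]] by simp
  show ?thesis unfolding l1_norm_def
  proof (rule infsum_mono)
    show "(\<lambda>y. \<bar>\<bar>f y\<bar> - \<bar>g y\<bar>\<bar>) summable_on A" by (rule abs_summ[OF s])
    show "(\<lambda>y. \<bar>f y - g y\<bar>) summable_on A" by (rule abs_summ[OF sfg])
  qed (rule abs_triangle_ineq3)
qed

lemma l1_diff_le:
  fixes f g :: "'b \<Rightarrow> real"
  assumes "f summable_on A" "g summable_on A"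
  shows "l1_norm A (\<lambda>y. f y - g y) \<le> l1_norm A f + l1_norm A g"
proof -
  have sfg: "(\<lambda>y. f y - g y) summable_on A"
    using summable_on_add[OF assms(1) summable_on_cmult_right[OF assms(2), of "-1"]] by simp
  have sf: "(\<lambda>y. \<bar>f y\<bar>) summable_on A" "(\<lambda>y. \<bar>g y\<bar>) summable_on A" using abs_summ[OF assms(1)] abs_summ[OF assms(2)] by auto
  have "l1_norm A (\<lambda>y. f y - g y) \<le> infsum (\<lambda>y. \<bar>f y\<bar> + \<bar>g y\<bar>) A"
    unfolding l1_norm_def
  proof (rule infsum_mono)
    show "(\<lambda>y. \<bar>f y - g y\<bar>) summable_on A" by (rule abs_summ[OF sfg])
    show "(\<lambda>y. \<bar>f y\<bar> + \<bar>g y\<bar>) summable_on A" using summable_on_add[OF sf] .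
  qed (rule abs_triangle_ineq4)
  also have "\<dots> = l1_norm A f + l1_norm A g" unfolding l1_norm_def using infsum_add[OF sf] .
  finally show ?thesis .
qed

lemma tv_prod:
  fixes w v :: "nat \<Rightarrow> real"
  assumes "\<And>j. 0 \<le> w j \<and> w j \<le> 1" "\<And>j. 0 \<le> v j \<and> v j \<le> 1"
  shows "(\<Sum>i<n. \<bar>w i * (\<Prod>j<i. 1 - w j) - v i * (\<Prod>j<i. 1 - v j)\<bar>)
           + \<bar>(\<Prod>j<n. 1 - w j) - (\<Prod>j<n. 1 - v j)\<bar> \<le> 2 * (\<Sum>j<n. \<bar>w j - v j\<bar>)"
proof (induction n)
  case 0
  then show ?case by simp
next
  case (Suc n)
  define p where "p = (\<Prod>j<n. 1 - w j)"
  define q where "q = (\<Prod>j<n. 1 - v j)"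
  have q0: "0 \<le> q" unfolding q_def by (rule prod_nonneg) (use assms(2) in simp)
  have q1: "q \<le> 1" unfolding q_def by (rule prod_le_1) (use assms(2) in simp)
  note q01 = q0 q1
  have w: "0 \<le> w n" "w n \<le> 1" using assms(1) by auto
  define D where "D = \<bar>p - q\<bar>"
  define E where "E = \<bar>w n - v n\<bar>"
  define X1 where "X1 = \<bar>w n * p - v n * q\<bar>"
  define X2 where "X2 = \<bar>(1 - w n) * p - (1 - v n) * q\<bar>"
  have a1: "X1 \<le> w n * D + q * E"
  proof -
    have "w n * p - v n * q = w n * (p - q) + q * (w n - v n)" by (simp add: algebra_simps)
    hence "\<bar>w n * p - v n * q\<bar> \<le> \<bar>w n * (p - q)\<bar> + \<bar>q * (w n - v n)\<bar>" by (metis abs_triangle_ineq)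
    thus ?thesis using w q01 unfolding X1_def D_def E_def by (simp add: abs_mult)
  qed
  have a2: "X2 \<le> D - w n * D + q * E"
  proof -
    have "(1 - w n) * p - (1 - v n) * q = (1 - w n) * (p - q) - q * (w n - v n)" by (simp add: algebra_simps)
    hence "\<bar>(1 - w n) * p - (1 - v n) * q\<bar> \<le> \<bar>(1 - w n) * (p - q)\<bar> + \<bar>q * (w n - v n)\<bar>" by (metis abs_triangle_ineq4)
    hence "X2 \<le> (1 - w n) * D + q * E" using w q01 unfolding X2_def D_def E_def by (simp add: abs_mult)
    thus ?thesis by (simp add: algebra_simps)
  qed
  have a3: "q * E \<le> E" using q01 unfolding E_def by (simp add: mult_left_le_one_le)
  have e1: "(\<Prod>j<Suc n. 1 - w j) = (1 - w n) * p" "(\<Prod>j<Suc n. 1 - v j) = (1 - v n) * q"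
    unfolding p_def q_def by (simp_all add: mult.commute)
  define S where "S = (\<Sum>i<n. \<bar>w i * (\<Prod>j<i. 1 - w j) - v i * (\<Prod>j<i. 1 - v j)\<bar>)"
  define T where "T = (\<Sum>j<n. \<bar>w j - v j\<bar>)"
  have e2: "(\<Sum>i<Suc n. \<bar>w i * (\<Prod>j<i. 1 - w j) - v i * (\<Prod>j<i. 1 - v j)\<bar>) = S + X1"
    unfolding S_def X1_def p_def q_def by simp
  have e3: "(\<Sum>j<Suc n. \<bar>w j - v j\<bar>) = T + E" unfolding T_def E_def by simp
  have IH: "S + D \<le> 2 * T"
    using Suc.IH unfolding p_def q_def S_def T_def D_def .
  have "X1 + X2 \<le> (w n * D + q * E) + (D - w n * D + q * E)" using add_mono[OF a1 a2] .
  also have "\<dots> = D + 2 * (q * E)" by simp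
  finally have a4: "X1 + X2 \<le> D + 2 * (q * E)" .
  have "S + X1 + X2 \<le> (S + D) + 2 * (q * E)" using a4 by simp
  also have "\<dots> \<le> 2 * T + 2 * E" using add_mono[OF IH mult_left_mono[OF a3, of 2]] by simp
  finally have "S + X1 + X2 \<le> 2 * (T + E)" by (simp add: algebra_simps)
  thus ?case unfolding e1 e2 e3 X2_def .
qed

lemma sum_prod_weights:
  fixes w :: "nat \<Rightarrow> real"
  shows "(\<Sum>i<n. w i * (\<Prod>j<i. 1 - w j)) = 1 - (\<Prod>j<n. 1 - w j)"
  by (induction n) (simp_all add: algebra_simps)

lemma geom_half: "(\<Sum>i<n. (1::real) / 2 ^ (i+1)) \<le> 1"
proof -
  have "(\<Sum>i<n. (1::real) / 2 ^ (i+1)) = 1 - 1 / 2 ^ n"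
    by (induction n) (simp_all add: field_simps)
  thus ?thesis by simp
qed

definition bump :: "('a \<Rightarrow> 'a \<Rightarrow> real) \<Rightarrow> 'a set \<Rightarrow> real \<Rightarrow> 'a \<Rightarrow> real" where
  "bump d A L x = Sup (insert 0 ((\<lambda>a. max 0 (1 - d x a / L)) ` A))"

lemma bump_props:
  assumes m: "metric_on X d" and AX: "A \<subseteq> X" and L: "L > 0" and x: "x \<in> X"
  shows "0 \<le> bump d A L x" "bump d A L x \<le> 1"
    "x \<in> A \<Longrightarrow> bump d A L x = 1"
    "bump d A L x > 0 \<Longrightarrow> \<exists>a\<in>A. d x a < L"
proof -
  let ?S = "insert 0 ((\<lambda>a. max 0 (1 - d x a / L)) ` A)"
  have dn: "\<And>a. a \<in> A \<Longrightarrow> 0 \<le> d x a" using m AX x unfolding metric_on_def by blast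
  have bdd: "bdd_above ?S" by (rule bdd_aboveI[of _ 1]) (use dn L in auto)
  show "0 \<le> bump d A L x" unfolding bump_def by (rule cSup_upper[OF _ bdd]) simp
  show "bump d A L x \<le> 1" unfolding bump_def by (rule cSup_least) (use dn L in auto)
  show "x \<in> A \<Longrightarrow> bump d A L x = 1"
  proof -
    assume xA: "x \<in> A"
    have "d x x = 0" using m x unfolding metric_on_def by blast
    hence "1 \<in> ?S" using xA by force
    hence "1 \<le> bump d A L x" unfolding bump_def by (rule cSup_upper[OF _ bdd])
    moreover have "bump d A L x \<le> 1" unfolding bump_def by (rule cSup_least) (use dn L in auto)
    ultimately show ?thesis by simp
  qed
  show "bump d A L x > 0 \<Longrightarrow> \<exists>a\<in>A. d x a < L"
  proof -
    assume "bump d A L x > 0"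
    then obtain s where "s \<in> ?S" "0 < s" unfolding bump_def using less_cSup_iff[OF _ bdd, of 0] by blast
    then obtain a where "a \<in> A" "0 < max 0 (1 - d x a / L)" by auto
    hence "0 < (1 - d x a / L)" by simp
    hence "d x a < L" using L by (simp add: field_simps)
    thus ?thesis using \<open>a \<in> A\<close> by blast
  qed
qed

lemma bump_lip:
  assumes m: "metric_on X d" and AX: "A \<subseteq> X" and L: "L > 0" and x: "x \<in> X" and x': "x' \<in> X"
  shows "\<bar>bump d A L x - bump d A L x'\<bar> \<le> d x x' / L"
proof -
  have main: "bump d A L u \<le> bump d A L v + d u v / L" if u: "u \<in> X" and v: "v \<in> X" for u v
  proof -
    have dn: "\<And>a. a \<in> A \<Longrightarrow> 0 \<le> d v a" using m AX v unfolding metric_on_def by blast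
    have bdd: "bdd_above (insert 0 ((\<lambda>a. max 0 (1 - d v a / L)) ` A))" by (rule bdd_aboveI[of _ 1]) (use dn L in auto)
    have duv: "0 \<le> d u v" using m u v unfolding metric_on_def by blast
    have b0: "0 \<le> bump d A L v" using bump_props(1)[OF m AX L v] .
    show ?thesis unfolding bump_def
    proof (rule cSup_least)
      fix s assume "s \<in> insert 0 ((\<lambda>a. max 0 (1 - d u a / L)) ` A)"
      then consider "s = 0" | a where "a \<in> A" "s = max 0 (1 - d u a / L)" by auto
      then show "s \<le> Sup (insert 0 ((\<lambda>a. max 0 (1 - d v a / L)) ` A)) + d u v / L"
      proof cases
        case 1 thus ?thesis using b0 duv L unfolding bump_def by simp
      next
        case 2
        have tri: "d v a \<le> d v u + d u a" "d v u = d u v" using m u v 2(1) AX unfolding metric_on_def by blast+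
        have h: "d v a / L \<le> (d u v + d u a) / L" using tri L by (simp add: divide_right_mono)
        hence "1 - d u a / L \<le> (1 - d v a / L) + d u v / L" by (simp add: add_divide_distrib)
        moreover have "0 \<le> d u v / L" using duv L by simp
        ultimately have "s \<le> max 0 (1 - d v a / L) + d u v / L"
          unfolding 2(2) by linarith
        also have "max 0 (1 - d v a / L) \<le> Sup (insert 0 ((\<lambda>a. max 0 (1 - d v a / L)) ` A))"
          by (rule cSup_upper[OF _ bdd]) (use 2(1) in auto)
        finally show ?thesis by simp
      qed
    qed simp
  qed
  have "d x' x = d x x'" using m x x' unfolding metric_on_def by blast
  thus ?thesis using main[OF x x'] main[OF x' x] by auto
qed



definition PA :: "real \<Rightarrow> real \<Rightarrow> 'a set \<Rightarrow> ('a \<Rightarrow> 'a \<Rightarrow> real) \<Rightarrow> ('a \<Rightarrow> 'a \<Rightarrow> real) \<Rightarrow> bool" where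
  "PA eps S X d \<xi> \<longleftrightarrow> (\<forall>x\<in>X. ((\<lambda>y. \<bar>\<xi> x y\<bar>) summable_on X) \<and> l1_norm X (\<xi> x) = 1) \<and>
        (\<forall>k::nat. \<forall>x1\<in>X. \<forall>x2\<in>X. d x1 x2 \<le> real k \<longrightarrow>
            l1_norm X (\<lambda>y. \<xi> x1 y - \<xi> x2 y) \<le> real k * eps) \<and>
        (\<forall>x\<in>X. \<forall>y. \<xi> x y \<noteq> 0 \<longrightarrow> y \<in> X \<and> d x y \<le> S)"

lemma upA_iff: "uniform_property_A \<X> \<longleftrightarrow> (\<forall>eps>0. \<exists>S>0. \<forall>p\<in>\<X>. \<exists>\<xi>. PA eps S (fst p) (snd p) \<xi>)"
  unfolding uniform_property_A_def PA_def by (simp add: case_prod_beta)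

lemma extend_zero:
  fixes f :: "'a \<Rightarrow> real"
  assumes "V \<subseteq> X" "\<And>y. y \<notin> V \<Longrightarrow> f y = 0"
  shows "f summable_on X \<longleftrightarrow> f summable_on V" "infsum f X = infsum f V"
proof -
  show "f summable_on X \<longleftrightarrow> f summable_on V"
    by (rule summable_on_cong_neutral) (use assms in auto)
  show "infsum f X = infsum f V"
    by (rule infsum_cong_neutral) (use assms in auto)
qed

lemma l1_extend_zero:
  fixes f :: "'a \<Rightarrow> real"
  assumes "V \<subseteq> X" "\<And>y. y \<notin> V \<Longrightarrow> f y = 0"
  shows "l1_norm X f = l1_norm V f"
  unfolding l1_norm_def by (rule extend_zero(2)) (use assms in auto)

lemma l1_nonneg_eq:
  fixes f :: "'a \<Rightarrow> real"
  assumes "\<And>y. 0 \<le> f y"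
  shows "l1_norm X f = infsum f X"
  unfolding l1_norm_def using assms by simp


lemma lin_summ:
  fixes f g :: "'a \<Rightarrow> real"
  assumes "f summable_on A" "g summable_on A"
  shows "(\<lambda>y. a * f y - b * g y) summable_on A"
  using summable_on_add[OF summable_on_cmult_right[OF assms(1), of a] summable_on_cmult_right[OF assms(2), of "-b"]] by simp

theorem theorem1p9:
  fixes \<X> :: "'a mspace set" and \<Y> :: "(nat \<Rightarrow> real) \<Rightarrow> 'a mspace set"
  assumes "\<forall>R. metric_family (\<Y> R)"
    and "\<forall>R. uniform_property_A (\<Y> R)"
    and "metric_family \<X>"
    and "\<forall>R. unif_decomposable \<X> R (\<Y> R)"
  shows "uniform_property_A \<X>"
  unfolding upA_iff
proof (intro allI impI)
  fix \<epsilon> :: real assume eps: "\<epsilon> > 0"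
  define M where "M = 2 / \<epsilon>"
  define L :: "nat \<Rightarrow> real" where "L i = 4 * M * 2^(i+1) / \<epsilon>" for i
  define R :: "nat \<Rightarrow> real" where "R n = 2 * L (n - 1) + M + 1" for n
  define kk :: "nat \<Rightarrow> nat" where "kk i = nat \<lceil>2 * L i + M\<rceil>" for i
  define ee where "ee i = \<epsilon> / (2 * real (kk i))" for i
  have M0: "M > 0" unfolding M_def using eps by simp
  have L0: "L i > 0" for i unfolding L_def using eps M0 by simp
  have kk1: "2 * L i + M \<le> real (kk i)" for i unfolding kk_def by linarith
  have kk0: "real (kk i) > 0" for i using kk1[of i] L0[of i] M0 by linarith
  have ee0: "ee i > 0" for i unfolding ee_def using kk0[of i] eps by simp
  have kkee: "real (kk i) * ee i = \<epsilon> / 2" for i unfolding ee_def using kk0[of i] by simp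
  have hML: "M / L i = (\<epsilon> / 4) * (1 / 2 ^ (i+1))" for i
    unfolding L_def using M0 eps by (simp add: field_simps)
  define Y where "Y = \<Y> R"
  have uA: "uniform_property_A Y" using assms(2) by (simp add: Y_def)
  have "\<forall>i. \<exists>S>0. \<forall>p\<in>Y. \<exists>\<xi>. PA (ee i) S (fst p) (snd p) \<xi>"
    using uA ee0 unfolding upA_iff by blast
  then obtain SS where SS0: "\<And>i. SS i > 0" and SS1: "\<And>i p. p \<in> Y \<Longrightarrow> \<exists>\<xi>. PA (ee i) (SS i) (fst p) (snd p) \<xi>"
    by metis
  have "\<exists>f. \<forall>p. p \<in> Y \<longrightarrow> PA (ee i) (SS i) (fst p) (snd p) (f p)" for i
  proof -
    have "\<forall>p. \<exists>\<xi>. p \<in> Y \<longrightarrow> PA (ee i) (SS i) (fst p) (snd p) \<xi>" using SS1 by blast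
    thus ?thesis by (rule choice)
  qed
  hence "\<forall>i. \<exists>f. \<forall>p. p \<in> Y \<longrightarrow> PA (ee i) (SS i) (fst p) (snd p) (f p)" by blast
  hence "\<exists>\<Xi>. \<forall>i. \<forall>p. p \<in> Y \<longrightarrow> PA (ee i) (SS i) (fst p) (snd p) (\<Xi> i p)" by (rule choice)
  then obtain \<Xi> where \<Xi>: "\<And>i p. p \<in> Y \<Longrightarrow> PA (ee i) (SS i) (fst p) (snd p) (\<Xi> i p)"
    by blast
  have "unif_decomposable \<X> R Y" using assms(4) Y_def by simp
  then obtain K where K: "\<forall>(X, d)\<in>\<X>. \<exists>\<U> :: nat \<Rightarrow> 'a set set.
        (\<forall>i\<in>{1..K}. (\<forall>V\<in>\<U> i. V \<subseteq> X \<and> induced_member V d Y) \<and> r_disjoint d (R i) (\<U> i)) \<and>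
        X \<subseteq> (\<Union>i\<in>{1..K}. \<Union>(\<U> i))"
    unfolding unif_decomposable_def ..
  define Sf where "Sf = (\<Sum>i<K. L i + SS i) + 1"
  have Sf0: "Sf > 0" unfolding Sf_def using L0 SS0 by (smt (verit) sum_nonneg)
  show "\<exists>S>0. \<forall>p\<in>\<X>. \<exists>\<xi>. PA \<epsilon> S (fst p) (snd p) \<xi>"
  proof (intro exI[of _ Sf] conjI Sf0 ballI)
    fix p assume p: "p \<in> \<X>"
    obtain X d where pXd: "p = (X, d)" by (cases p)
    have m: "metric_on X d" using assms(3) p pXd unfolding metric_family_def by auto
    have dnn: "\<And>x y. x \<in> X \<Longrightarrow> y \<in> X \<Longrightarrow> 0 \<le> d x y"
      and dz: "\<And>x y. x \<in> X \<Longrightarrow> y \<in> X \<Longrightarrow> d x y = 0 \<longleftrightarrow> x = y"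
      and dsym: "\<And>x y. x \<in> X \<Longrightarrow> y \<in> X \<Longrightarrow> d x y = d y x"
      and tri: "\<And>x y z. x \<in> X \<Longrightarrow> y \<in> X \<Longrightarrow> z \<in> X \<Longrightarrow> d x z \<le> d x y + d y z"
      using m unfolding metric_on_def by blast+
    have "case p of (X, d) \<Rightarrow> \<exists>\<U> :: nat \<Rightarrow> 'a set set.
        (\<forall>i\<in>{1..K}. (\<forall>V\<in>\<U> i. V \<subseteq> X \<and> induced_member V d Y) \<and> r_disjoint d (R i) (\<U> i)) \<and>
        X \<subseteq> (\<Union>i\<in>{1..K}. \<Union>(\<U> i))" using K p by (rule bspec)
    hence "\<exists>\<U> :: nat \<Rightarrow> 'a set set.
        (\<forall>i\<in>{1..K}. (\<forall>V\<in>\<U> i. V \<subseteq> X \<and> induced_member V d Y) \<and> r_disjoint d (R i) (\<U> i)) \<and>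
        X \<subseteq> (\<Union>i\<in>{1..K}. \<Union>(\<U> i))" unfolding pXd by simp
    then obtain \<U> :: "nat \<Rightarrow> 'a set set" where
      UU: "(\<forall>i\<in>{1..K}. (\<forall>V\<in>\<U> i. V \<subseteq> X \<and> induced_member V d Y) \<and> r_disjoint d (R i) (\<U> i)) \<and>
        X \<subseteq> (\<Union>i\<in>{1..K}. \<Union>(\<U> i))" ..
    have U1: "\<And>i. i \<in> {1..K} \<Longrightarrow> (\<forall>V\<in>\<U> i. V \<subseteq> X \<and> induced_member V d Y) \<and> r_disjoint d (R i) (\<U> i)"
      using UU by blast
    have Ucov: "X \<subseteq> (\<Union>i\<in>{1..K}. \<Union>(\<U> i))" using UU by blast
    define A where "A i = \<Union>(\<U> (Suc i))" for i
    have U1': "(\<forall>V\<in>\<U> (Suc i). V \<subseteq> X \<and> induced_member V d Y) \<and> r_disjoint d (R (Suc i)) (\<U> (Suc i))"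
      if "i < K" for i
    proof -
      have "Suc i \<in> {1..K}" using that by simp
      thus ?thesis by (rule U1)
    qed
    have UX: "\<And>i V. i < K \<Longrightarrow> V \<in> \<U> (Suc i) \<Longrightarrow> V \<subseteq> X" using U1' by blast
    have AX: "\<And>i. i < K \<Longrightarrow> A i \<subseteq> X" unfolding A_def using UX by blast
    define w where "w i x = (if i < K then bump d (A i) (L i) x else 0)" for i x
    have w01: "0 \<le> w i x \<and> w i x \<le> 1" if "x \<in> X" for i x
      using bump_props(1,2)[OF m AX L0 that] unfolding w_def by auto
    have wlip: "\<bar>w i x - w i x'\<bar> \<le> d x x' / L i" if "x \<in> X" "x' \<in> X" for i x x'
      using bump_lip[OF m AX L0 that] dnn[OF that] L0[of i] unfolding w_def by auto
    have wpos: "i < K \<and> (\<exists>a\<in>A i. d x a < L i)" if "x \<in> X" "w i x > 0" for i x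
      using bump_props(4)[OF m AX L0 \<open>x \<in> X\<close>] that unfolding w_def by (auto split: if_splits)
    define pick where "pick i x = (SOME q. snd q \<in> \<U> (Suc i) \<and> fst q \<in> snd q \<and> d x (fst q) < L i)" for i x
    have pick: "snd (pick i x) \<in> \<U> (Suc i) \<and> fst (pick i x) \<in> snd (pick i x) \<and> d x (fst (pick i x)) < L i"
      if xX: "x \<in> X" and wp: "w i x > 0" for i x
    proof -
      obtain a where "a \<in> A i" "d x a < L i" using wpos[OF xX wp] by blast
      then obtain V where "V \<in> \<U> (Suc i)" "a \<in> V" unfolding A_def by blast
      hence "\<exists>q. snd q \<in> \<U> (Suc i) \<and> fst q \<in> snd q \<and> d x (fst q) < L i"
        using \<open>d x a < L i\<close> by (intro exI[of _ "(a, V)"]) simp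
      thus ?thesis unfolding pick_def by (rule someI_ex)
    qed
    define E where "E V = (SOME e. (V, e) \<in> Y \<and> (\<forall>x\<in>V. \<forall>y\<in>V. e x y = d x y))" for V
    have Eok: "(V, E V) \<in> Y \<and> (\<forall>x\<in>V. \<forall>y\<in>V. E V x y = d x y)"
      if "i < K" "V \<in> \<U> (Suc i)" for i V
    proof -
      have "induced_member V d Y" using U1'[OF that(1)] that(2) by blast
      hence "\<exists>e. (V, e) \<in> Y \<and> (\<forall>x\<in>V. \<forall>y\<in>V. e x y = d x y)"
        unfolding induced_member_def by auto
      thus ?thesis unfolding E_def by (rule someI_ex)
    qed
    have PAV: "PA (ee i) (SS i) V (E V) (\<Xi> i (V, E V))" if "i < K" "V \<in> \<U> (Suc i)" for i V
      using \<Xi>[of "(V, E V)" i] Eok[OF that] by simp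

    define \<eta> where "\<eta> i x = (if w i x > 0 then (\<lambda>y. \<bar>\<Xi> i (snd (pick i x), E (snd (pick i x))) (fst (pick i x)) y\<bar>) else (\<lambda>y. 0))" for i x
    have eta: "(\<eta> i x) summable_on X \<and> (\<forall>y. 0 \<le> \<eta> i x y) \<and> (w i x > 0 \<longrightarrow> l1_norm X (\<eta> i x) = 1)
        \<and> l1_norm X (\<eta> i x) \<le> 1 \<and> (\<forall>y. \<eta> i x y \<noteq> 0 \<longrightarrow> y \<in> X \<and> d x y < L i + SS i)"
      if xX: "x \<in> X" for i x
    proof (cases "w i x > 0")
      case False
      then show ?thesis unfolding \<eta>_def l1_norm_def by simp
    next
      case True
      define V where "V = snd (pick i x)"
      define a where "a = fst (pick i x)"
      have iK: "i < K" using wpos[OF xX True] by blast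
      have pk: "V \<in> \<U> (Suc i)" "a \<in> V" "d x a < L i" using pick[OF xX True] unfolding V_def a_def by auto
      have VX: "V \<subseteq> X" using UX[OF iK pk(1)] .
      have Eo: "\<forall>u\<in>V. \<forall>v\<in>V. E V u v = d u v" using Eok[OF iK pk(1)] by blast
      define F where "F = \<Xi> i (V, E V)"
      have P: "PA (ee i) (SS i) V (E V) F" unfolding F_def by (rule PAV[OF iK pk(1)])
      have Fs: "(\<lambda>y. \<bar>F a y\<bar>) summable_on V" "l1_norm V (F a) = 1" using P pk(2) unfolding PA_def by auto
      have Fsupp: "\<And>y. F a y \<noteq> 0 \<Longrightarrow> y \<in> V \<and> E V a y \<le> SS i" using P pk(2) unfolding PA_def by auto
      have eq: "\<eta> i x = (\<lambda>y. \<bar>F a y\<bar>)" unfolding \<eta>_def F_def V_def a_def using True by simp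
      have z: "\<And>y. y \<notin> V \<Longrightarrow> \<bar>F a y\<bar> = 0" using Fsupp by auto
      have s: "(\<lambda>y. \<bar>F a y\<bar>) summable_on X" using extend_zero(1)[OF VX z] Fs(1) by simp
      have l: "l1_norm X (\<lambda>y. \<bar>F a y\<bar>) = 1"
        using l1_extend_zero[OF VX z] Fs(2) unfolding l1_norm_def by simp
      have sup: "y \<in> X \<and> d x y < L i + SS i" if "\<bar>F a y\<bar> \<noteq> 0" for y
      proof -
        have yV: "y \<in> V" and ey: "E V a y \<le> SS i" using Fsupp that by auto
        hence "d a y \<le> SS i" using Eo pk(2) by auto
        moreover have "d x y \<le> d x a + d a y" using tri xX VX pk(2) yV by blast
        ultimately show ?thesis using pk(3) VX yV by auto
      qed
      show ?thesis unfolding eq using s l sup by auto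
    qed
    have etaclose: "l1_norm X (\<lambda>y. \<eta> i x1 y - \<eta> i x2 y) \<le> \<epsilon> / 2"
      if x1: "x1 \<in> X" and x2: "x2 \<in> X" and dM: "d x1 x2 \<le> M" and w1: "w i x1 > 0" and w2: "w i x2 > 0" for i x1 x2
    proof -
      define V1 where "V1 = snd (pick i x1)"
      define a1 where "a1 = fst (pick i x1)"
      define V2 where "V2 = snd (pick i x2)"
      define a2 where "a2 = fst (pick i x2)"
      have iK: "i < K" using wpos[OF x1 w1] by blast
      have pk1: "V1 \<in> \<U> (Suc i)" "a1 \<in> V1" "d x1 a1 < L i" using pick[OF x1 w1] unfolding V1_def a1_def by auto
      have pk2: "V2 \<in> \<U> (Suc i)" "a2 \<in> V2" "d x2 a2 < L i" using pick[OF x2 w2] unfolding V2_def a2_def by auto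
      have V1X: "V1 \<subseteq> X" using UX[OF iK pk1(1)] .
      have V2X: "V2 \<subseteq> X" using UX[OF iK pk2(1)] .
      have a1X: "a1 \<in> X" using V1X pk1(2) by blast
      have a2X: "a2 \<in> X" using V2X pk2(2) by blast
      have "d a1 a2 \<le> d a1 x1 + d x1 a2" using tri[OF a1X x1 a2X] .
      moreover have "d x1 a2 \<le> d x1 x2 + d x2 a2" using tri[OF x1 x2 a2X] .
      moreover have "d a1 x1 = d x1 a1" using dsym[OF a1X x1] .
      ultimately have da: "d a1 a2 \<le> 2 * L i + M" using pk1(3) pk2(3) dM by linarith
      have VV: "V1 = V2"
      proof (rule ccontr)
        assume ne: "V1 \<noteq> V2"
        have "r_disjoint d (R (Suc i)) (\<U> (Suc i))" using U1'[OF iK] by blast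
        hence "d a1 a2 > R (Suc i)" using pk1(1,2) pk2(1,2) ne unfolding r_disjoint_def by blast
        moreover have "R (Suc i) = 2 * L i + M + 1" unfolding R_def by simp
        ultimately show False using da by linarith
      qed
      define F where "F = \<Xi> i (V1, E V1)"
      have P: "PA (ee i) (SS i) V1 (E V1) F" unfolding F_def by (rule PAV[OF iK pk1(1)])
      have Eo: "\<forall>u\<in>V1. \<forall>v\<in>V1. E V1 u v = d u v" using Eok[OF iK pk1(1)] by blast
      have a2V: "a2 \<in> V1" using pk2(2) VV by simp
      have e1: "\<eta> i x1 = (\<lambda>y. \<bar>F a1 y\<bar>)" unfolding \<eta>_def F_def V1_def a1_def using w1 by simp
      have sp2: "snd (pick i x2) = V1" using VV unfolding V2_def by simp
      have e2: "\<eta> i x2 = (\<lambda>y. \<bar>F a2 y\<bar>)" unfolding \<eta>_def F_def a2_def using w2 sp2 by simp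
      have Fs1: "F a1 summable_on V1" using P pk1(2) real_summable_abs_iff[of "F a1" V1] unfolding PA_def by blast
      have Fs2: "F a2 summable_on V1" using P a2V real_summable_abs_iff[of "F a2" V1] unfolding PA_def by blast
      have Fsupp: "\<And>u y. u \<in> V1 \<Longrightarrow> F u y \<noteq> 0 \<Longrightarrow> y \<in> V1" using P unfolding PA_def by blast
      have z: "\<bar>F a1 y\<bar> - \<bar>F a2 y\<bar> = 0" if "y \<notin> V1" for y
      proof -
        have "F a1 y = 0" using Fsupp[OF pk1(2)] that by blast
        moreover have "F a2 y = 0" using Fsupp[OF a2V] that by blast
        ultimately show ?thesis by simp
      qed
      have Ed: "E V1 a1 a2 \<le> real (kk i)" using Eo pk1(2) a2V da kk1[of i] by auto
      have var: "l1_norm V1 (\<lambda>y. F a1 y - F a2 y) \<le> real (kk i) * ee i"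
        using P pk1(2) a2V Ed unfolding PA_def by blast
      have "l1_norm X (\<lambda>y. \<eta> i x1 y - \<eta> i x2 y) = l1_norm V1 (\<lambda>y. \<bar>F a1 y\<bar> - \<bar>F a2 y\<bar>)"
        unfolding e1 e2 by (rule l1_extend_zero[OF V1X z])
      also have "\<dots> \<le> l1_norm V1 (\<lambda>y. F a1 y - F a2 y)" by (rule l1_absdiff_le[OF Fs1 Fs2])
      also have "\<dots> \<le> \<epsilon> / 2" using var kkee[of i] by simp
      finally show ?thesis .
    qed
    define \<phi> where "\<phi> i x = w i x * (\<Prod>j<i. 1 - w j x)" for i x
    have Pnn: "0 \<le> (\<Prod>j<i. 1 - w j x)" if "x \<in> X" for i x
      by (rule prod_nonneg) (use w01[OF that] in simp)
    have phi0: "0 \<le> \<phi> i x" if "x \<in> X" for i x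
      unfolding \<phi>_def using w01[OF that] Pnn[OF that] by simp
    have phipos: "w i x > 0" if "x \<in> X" "\<phi> i x > 0" for i x
    proof (rule ccontr)
      assume "\<not> w i x > 0"
      hence "w i x = 0" using w01[OF that(1), of i] by linarith
      thus False using that(2) unfolding \<phi>_def by simp
    qed
    have phisum: "(\<Sum>i<K. \<phi> i x) = 1" if xX: "x \<in> X" for x
    proof -
      from Ucov xX obtain n where n: "n \<in> {1..K}" "x \<in> \<Union>(\<U> n)" by blast
      define i where "i = n - 1"
      have iK: "i < K" and ni: "n = Suc i" using n(1) unfolding i_def by auto
      have "x \<in> A i" unfolding A_def using n(2) ni by simp
      hence "w i x = 1" using bump_props(3)[OF m AX[OF iK] L0 xX] iK unfolding w_def by simp
      hence "(\<Prod>j<K. 1 - w j x) = 0" using iK by (intro prod_zero) auto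
      thus ?thesis using sum_prod_weights[of "\<lambda>j. w j x" K] unfolding \<phi>_def by simp
    qed
    define \<xi> where "\<xi> x y = (\<Sum>i<K. \<phi> i x * \<eta> i x y)" for x y
    have termsumm: "(\<lambda>y. \<phi> i x * \<eta> i x y) summable_on X" if "x \<in> X" for i x
      using summable_on_cmult_right eta[OF that] by blast
    have xs: "(\<xi> x) summable_on X \<and> infsum (\<xi> x) X = (\<Sum>i<K. infsum (\<lambda>y. \<phi> i x * \<eta> i x y) X)" if "x \<in> X" for x
      unfolding \<xi>_def using finite_sum_summable[of "{..<K}" "\<lambda>i y. \<phi> i x * \<eta> i x y" X] termsumm[OF that] by blast
    have xnn: "0 \<le> \<xi> x y" if "x \<in> X" for x y
      unfolding \<xi>_def using phi0[OF that] eta[OF that] by (intro sum_nonneg) simp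
    have xnorm: "l1_norm X (\<xi> x) = 1" if xX: "x \<in> X" for x
    proof -
      have "l1_norm X (\<xi> x) = infsum (\<xi> x) X" using xnn[OF xX] by (rule l1_nonneg_eq)
      also have "\<dots> = (\<Sum>i<K. infsum (\<lambda>y. \<phi> i x * \<eta> i x y) X)" using xs[OF xX] by blast
      also have "\<dots> = (\<Sum>i<K. \<phi> i x)"
      proof (rule sum.cong)
        fix i assume "i \<in> {..<K}"
        have "infsum (\<lambda>y. \<phi> i x * \<eta> i x y) X = \<phi> i x * infsum (\<eta> i x) X"
          using eta[OF xX, of i] by (simp add: infsum_cmult_right)
        also have "infsum (\<eta> i x) X = l1_norm X (\<eta> i x)"
          using eta[OF xX, of i] by (simp add: l1_nonneg_eq)
        also have "\<phi> i x * l1_norm X (\<eta> i x) = \<phi> i x"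
        proof (cases "\<phi> i x > 0")
          case True
          thus ?thesis using phipos[OF xX True] eta[OF xX, of i] by simp
        next
          case False
          hence "\<phi> i x = 0" using phi0[OF xX, of i] by linarith
          thus ?thesis by simp
        qed
        finally show "infsum (\<lambda>y. \<phi> i x * \<eta> i x y) X = \<phi> i x" .
      qed simp
      also have "\<dots> = 1" by (rule phisum[OF xX])
      finally show ?thesis .
    qed
    have xclose: "l1_norm X (\<lambda>y. \<xi> x1 y - \<xi> x2 y) \<le> \<epsilon>"
      if x1: "x1 \<in> X" and x2: "x2 \<in> X" and dM: "d x1 x2 \<le> M" for x1 x2
    proof -
      have eqd: "(\<lambda>y. \<xi> x1 y - \<xi> x2 y) = (\<lambda>y. \<Sum>i<K. (\<phi> i x1 * \<eta> i x1 y - \<phi> i x2 * \<eta> i x2 y))"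
        unfolding \<xi>_def by (simp add: sum_subtractf)
      have gs: "(\<lambda>y. \<phi> i x1 * \<eta> i x1 y - \<phi> i x2 * \<eta> i x2 y) summable_on X" for i
        using lin_summ eta[OF x1, of i] eta[OF x2, of i] by blast
      have st1: "l1_norm X (\<lambda>y. \<xi> x1 y - \<xi> x2 y)
          \<le> (\<Sum>i<K. l1_norm X (\<lambda>y. \<phi> i x1 * \<eta> i x1 y - \<phi> i x2 * \<eta> i x2 y))"
        unfolding eqd by (rule l1_sum_le) (use gs in auto)
      have st2: "l1_norm X (\<lambda>y. \<phi> i x1 * \<eta> i x1 y - \<phi> i x2 * \<eta> i x2 y)
          \<le> \<bar>\<phi> i x1 - \<phi> i x2\<bar> + \<phi> i x2 * (\<epsilon> / 2)" for i
      proof -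
        have s1: "\<eta> i x1 summable_on X" and s2: "\<eta> i x2 summable_on X"
          and n1: "l1_norm X (\<eta> i x1) \<le> 1" and n2: "l1_norm X (\<eta> i x2) \<le> 1"
          using eta[OF x1, of i] eta[OF x2, of i] by auto
        have p1: "0 \<le> \<phi> i x1" and p2: "0 \<le> \<phi> i x2" using phi0 x1 x2 by auto
        have ab: "0 \<le> \<bar>\<phi> i x1 - \<phi> i x2\<bar>" by simp
        have pe: "0 \<le> \<phi> i x2 * (\<epsilon> / 2)" using p2 eps by simp
        show ?thesis
        proof (cases "\<phi> i x1 = 0")
          case True
          have "l1_norm X (\<lambda>y. \<phi> i x1 * \<eta> i x1 y - \<phi> i x2 * \<eta> i x2 y)
              \<le> \<bar>\<phi> i x1 - \<phi> i x2\<bar> * l1_norm X (\<eta> i x2) + \<bar>\<phi> i x1\<bar> * l1_norm X (\<lambda>y. \<eta> i x1 y - \<eta> i x2 y)"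
            by (rule l1_lincomb'[OF s1 s2])
          also have "\<dots> = \<bar>\<phi> i x1 - \<phi> i x2\<bar> * l1_norm X (\<eta> i x2)" using True by simp
          also have "\<dots> \<le> \<bar>\<phi> i x1 - \<phi> i x2\<bar>" using n2 ab by (simp add: mult_left_le)
          finally show ?thesis using pe by linarith
        next
          case False
          hence q1: "\<phi> i x1 > 0" using p1 by linarith
          have "l1_norm X (\<lambda>y. \<phi> i x1 * \<eta> i x1 y - \<phi> i x2 * \<eta> i x2 y)
              \<le> \<bar>\<phi> i x1 - \<phi> i x2\<bar> * l1_norm X (\<eta> i x1) + \<bar>\<phi> i x2\<bar> * l1_norm X (\<lambda>y. \<eta> i x1 y - \<eta> i x2 y)"
            by (rule l1_lincomb[OF s1 s2])
          also have "\<bar>\<phi> i x1 - \<phi> i x2\<bar> * l1_norm X (\<eta> i x1) \<le> \<bar>\<phi> i x1 - \<phi> i x2\<bar>"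
            using n1 ab by (simp add: mult_left_le)
          also have "\<bar>\<phi> i x2\<bar> * l1_norm X (\<lambda>y. \<eta> i x1 y - \<eta> i x2 y) \<le> \<phi> i x2 * (\<epsilon> / 2)"
          proof (cases "\<phi> i x2 = 0")
            case True thus ?thesis by simp
          next
            case False
            hence q2: "\<phi> i x2 > 0" using p2 by linarith
            have "l1_norm X (\<lambda>y. \<eta> i x1 y - \<eta> i x2 y) \<le> \<epsilon> / 2"
              by (rule etaclose[OF x1 x2 dM phipos[OF x1 q1] phipos[OF x2 q2]])
            hence "\<phi> i x2 * l1_norm X (\<lambda>y. \<eta> i x1 y - \<eta> i x2 y) \<le> \<phi> i x2 * (\<epsilon> / 2)"
              by (rule mult_left_mono[OF _ p2])
            thus ?thesis using p2 by simp
          qed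
          finally show ?thesis by simp
        qed
      qed
      have st3: "(\<Sum>i<K. \<bar>\<phi> i x1 - \<phi> i x2\<bar>) \<le> 2 * (\<Sum>j<K. \<bar>w j x1 - w j x2\<bar>)"
      proof -
        have "(\<Sum>i<K. \<bar>\<phi> i x1 - \<phi> i x2\<bar>) + \<bar>(\<Prod>j<K. 1 - w j x1) - (\<Prod>j<K. 1 - w j x2)\<bar>
            \<le> 2 * (\<Sum>j<K. \<bar>w j x1 - w j x2\<bar>)"
          unfolding \<phi>_def by (rule tv_prod) (use w01 x1 x2 in auto)
        thus ?thesis by simp
      qed
      have st4: "(\<Sum>j<K. \<bar>w j x1 - w j x2\<bar>) \<le> \<epsilon> / 4"
      proof -
        have "(\<Sum>j<K. \<bar>w j x1 - w j x2\<bar>) \<le> (\<Sum>j<K. (\<epsilon> / 4) * (1 / 2 ^ (j+1)))"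
        proof (rule sum_mono)
          fix j assume "j \<in> {..<K}"
          have "\<bar>w j x1 - w j x2\<bar> \<le> d x1 x2 / L j" by (rule wlip[OF x1 x2])
          also have "\<dots> \<le> M / L j" using dM L0[of j] by (simp add: divide_right_mono)
          also have "\<dots> = (\<epsilon> / 4) * (1 / 2 ^ (j+1))" by (rule hML)
          finally show "\<bar>w j x1 - w j x2\<bar> \<le> (\<epsilon> / 4) * (1 / 2 ^ (j+1))" .
        qed
        also have "\<dots> = (\<epsilon> / 4) * (\<Sum>j<K. 1 / 2 ^ (j+1))" by (simp add: sum_distrib_left)
        also have "\<dots> \<le> (\<epsilon> / 4) * 1" using geom_half[of K] eps by (intro mult_left_mono) auto
        finally show ?thesis by simp
      qed
      have st5: "(\<Sum>i<K. \<bar>\<phi> i x1 - \<phi> i x2\<bar> + \<phi> i x2 * (\<epsilon> / 2))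
          = (\<Sum>i<K. \<bar>\<phi> i x1 - \<phi> i x2\<bar>) + \<epsilon> / 2"
      proof -
        have "(\<Sum>i<K. \<phi> i x2 * (\<epsilon> / 2)) = (\<Sum>i<K. \<phi> i x2) * (\<epsilon> / 2)"
          by (rule sum_distrib_right[symmetric])
        also have "\<dots> = \<epsilon> / 2" using phisum[OF x2] by simp
        finally show ?thesis by (simp only: sum.distrib)
      qed
      have "l1_norm X (\<lambda>y. \<xi> x1 y - \<xi> x2 y) \<le> (\<Sum>i<K. \<bar>\<phi> i x1 - \<phi> i x2\<bar> + \<phi> i x2 * (\<epsilon> / 2))"
        using st1 sum_mono[of "{..<K}", OF st2] by (rule order.trans)
      thus ?thesis using st3 st4 st5 by linarith
    qed
    have h1: "\<forall>x\<in>X. ((\<lambda>y. \<bar>\<xi> x y\<bar>) summable_on X) \<and> l1_norm X (\<xi> x) = 1"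
      using xs xnorm abs_summ by blast
    have h2: "\<forall>k::nat. \<forall>x1\<in>X. \<forall>x2\<in>X. d x1 x2 \<le> real k \<longrightarrow> l1_norm X (\<lambda>y. \<xi> x1 y - \<xi> x2 y) \<le> real k * \<epsilon>"
    proof (intro allI ballI impI)
      fix k :: nat and x1 x2 assume x1: "x1 \<in> X" and x2: "x2 \<in> X" and dk: "d x1 x2 \<le> real k"
      show "l1_norm X (\<lambda>y. \<xi> x1 y - \<xi> x2 y) \<le> real k * \<epsilon>"
      proof (cases "k = 0")
        case True
        hence "d x1 x2 = 0" using dk dnn[OF x1 x2] by simp
        hence "x1 = x2" using dz[OF x1 x2] by simp
        thus ?thesis using True by (simp add: l1_norm_def)
      next
        case False
        hence k1: "1 \<le> real k" by simp
        show ?thesis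
        proof (cases "real k \<ge> M")
          case True
          have "l1_norm X (\<lambda>y. \<xi> x1 y - \<xi> x2 y) \<le> l1_norm X (\<xi> x1) + l1_norm X (\<xi> x2)"
            by (rule l1_diff_le) (use xs x1 x2 in blast)+
          also have "\<dots> = M * \<epsilon>" using xnorm[OF x1] xnorm[OF x2] eps unfolding M_def by simp
          also have "\<dots> \<le> real k * \<epsilon>" using True eps by (simp add: mult_right_mono)
          finally show ?thesis .
        next
          case False
          hence "d x1 x2 \<le> M" using dk by simp
          hence "l1_norm X (\<lambda>y. \<xi> x1 y - \<xi> x2 y) \<le> \<epsilon>" by (rule xclose[OF x1 x2])
          also have "\<epsilon> \<le> real k * \<epsilon>" using k1 eps by simp
          finally show ?thesis .
        qed
      qed
    qed
    have h3: "\<forall>x\<in>X. \<forall>y. \<xi> x y \<noteq> 0 \<longrightarrow> y \<in> X \<and> d x y \<le> Sf"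
    proof (intro ballI allI impI)
      fix x y assume xX: "x \<in> X" and ne: "\<xi> x y \<noteq> 0"
      then obtain i where iK: "i \<in> {..<K}" and t: "\<phi> i x * \<eta> i x y \<noteq> 0"
        unfolding \<xi>_def by (meson sum.not_neutral_contains_not_neutral)
      hence "\<eta> i x y \<noteq> 0" by auto
      hence yy: "y \<in> X" "d x y < L i + SS i" using eta[OF xX, of i] by auto
      have "L i + SS i \<le> (\<Sum>i<K. L i + SS i)"
        by (rule member_le_sum) (use iK L0 SS0 in \<open>auto intro: add_nonneg_nonneg less_imp_le\<close>)
      thus "y \<in> X \<and> d x y \<le> Sf" using yy unfolding Sf_def by linarith
    qed
    have "PA \<epsilon> Sf X d \<xi>" unfolding PA_def using h1 h2 h3 by (intro conjI)
    thus "\<exists>\<xi>. PA \<epsilon> Sf (fst p) (snd p) \<xi>" unfolding pXd by auto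
  qed
qed

end
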